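(* Let $d$ be a positive integer, let $y_1, \ldots, y_d$ and $C$ be positive real numbers, and define $\pi : \mathbb{Z}^d \to \mathbb{R}$ by $\pi(x_1, \ldots, x_d) = \sum_{i=1}^d x_i y_i$. Let $O^d = \mathbb{Z}_{\ge 0}^d$. Suppose $S \subseteq O^d$ is a finite set such that $\pi(\mathbf{s}) \le C$ for all $\mathbf{s} \in S$, and such that $O^d + (O^d \setminus S) \subseteq O^d \setminus S$, where $A + B = \{a + b : a \in A, b \in B\}$. Then \[ (d+1) \sum_{\mathbf{s} \in S} \bigl(C - \pi(\mathbf{s})\bigr) \ge C\,|S|. \] *)

theory Defs
  imports Main Complex_Main
begin

text \<open>Points of Z^d are represented as functions nat => int vanishing outside {..<d};
 coordinates are indexed 0..d-1.\<close>

definition orth :: "nat \<Rightarrow> (nat \<Rightarrow> int) set" where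
  "orth d = {x. (\<forall>i<d. 0 \<le> x i) \<and> (\<forall>i\<ge>d. x i = 0)}"

definition proj :: "nat \<Rightarrow> (nat \<Rightarrow> real) \<Rightarrow> (nat \<Rightarrow> int) \<Rightarrow> real" where
  "proj d y x = (\<Sum>i<d. real_of_int (x i) * y i)"

definition setplus :: "(nat \<Rightarrow> int) set \<Rightarrow> (nat \<Rightarrow> int) set \<Rightarrow> (nat \<Rightarrow> int) set" where
  "setplus A B = {(\<lambda>i. a i + b i) | a b. a \<in> A \<and> b \<in> B}"

end

theory Submission
  imports Defs
begin

lemma proj_upd:
  assumes "i < d"
  shows "proj d y (t(i := v)) = proj d y t + real_of_int (v - t i) * y i"
proof -
  have "proj d y (t(i := v)) = (\<Sum>k<d. real_of_int (t k) * y k + (if k = i then real_of_int (v - t i) * y i else 0))"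
    unfolding proj_def by (rule sum.cong) (auto simp: algebra_simps)
  also have "\<dots> = proj d y t + real_of_int (v - t i) * y i"
    using assms by (simp add: sum.distrib proj_def)
  finally show ?thesis .
qed

lemma downclosed:
  assumes S: "S \<subseteq> orth d" and up: "setplus (orth d) (orth d - S) \<subseteq> orth d - S"
    and s: "s \<in> S" and t: "t \<in> orth d" and le: "\<And>k. t k \<le> s k"
  shows "t \<in> S"
proof (rule ccontr)
  assume "t \<notin> S"
  have so: "s \<in> orth d" using S s by auto
  have "(\<lambda>k. s k - t k) \<in> orth d" using so t le unfolding orth_def by auto
  hence "(\<lambda>k. (s k - t k) + t k) \<in> setplus (orth d) (orth d - S)"
    unfolding setplus_def using t \<open>t \<notin> S\<close> by (intro CollectI exI[of _ "\<lambda>k. s k - t k"] exI[of _ t]) auto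
  hence "s \<in> orth d - S" using up by auto
  thus False using s by simp
qed

theorem lemma3:
  fixes d :: nat and y :: "nat \<Rightarrow> real" and C :: real and S :: "(nat \<Rightarrow> int) set"
  assumes "d \<ge> 1"
    and "\<And>i. i < d \<Longrightarrow> y i > 0"
    and "C > 0"
    and "S \<subseteq> orth d"
    and "finite S"
    and "\<And>s. s \<in> S \<Longrightarrow> proj d y s \<le> C"
    and "setplus (orth d) (orth d - S) \<subseteq> orth d - S"
  shows "real (d + 1) * (\<Sum>s\<in>S. C - proj d y s) \<ge> C * real (card S)"
proof -
  note S = assms(4) and fin = assms(5) and bnd = assms(6) and up = assms(7)
  define A where "A i t = {j::nat. 1 \<le> j \<and> t(i := t i + int j) \<in> S}" for i t
  have finA: "finite (A i t)" for i t
  proof -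
    have "inj_on (\<lambda>j::nat. t(i := t i + int j)) (A i t)"
      by (rule inj_onI) (metis fun_upd_same add_left_cancel of_nat_eq_iff)
    moreover have "(\<lambda>j::nat. t(i := t i + int j)) ` A i t \<subseteq> S" unfolding A_def by auto
    ultimately show ?thesis using fin by (meson finite_imageD finite_subset)
  qed
  have cardA: "y i * real (card (A i t)) \<le> C - proj d y t" if i: "i < d" and t: "t \<in> S" for i t
  proof (cases "A i t = {}")
    case True then show ?thesis using bnd[OF t] by simp
  next
    case False
    let ?m = "Max (A i t)"
    have mA: "?m \<in> A i t" using False finA by simp
    have "A i t \<subseteq> {1..?m}" using finA unfolding A_def by auto
    hence "card (A i t) \<le> ?m" using card_mono[of "{1..?m}"] by fastforce
    moreover have "proj d y t + real ?m * y i \<le> C"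
      using mA bnd[of "t(i := t i + int ?m)"] proj_upd[OF i, of y t] unfolding A_def by simp
    moreover have "y i > 0" using assms(2) i by simp
    ultimately show ?thesis
      by (smt (verit, ccfv_SIG) mult.commute mult_left_mono of_nat_le_iff)
  qed
  have count: "(\<Sum>s\<in>S. nat (s i)) = (\<Sum>t\<in>S. card (A i t))" if i: "i < d" for i
  proof -
    have "(\<Sum>s\<in>S. nat (s i)) = (\<Sum>s\<in>S. card {1..nat (s i)})" by simp
    also have "\<dots> = card (SIGMA s:S. {1..nat (s i)})" using fin by (simp add: card_SigmaI)
    also have "\<dots> = card (SIGMA t:S. A i t)"
    proof (rule bij_betw_same_card[where f = "\<lambda>(s, j). (s(i := s i - int j), j)"])
      show "bij_betw (\<lambda>(s, j). (s(i := s i - int j), j)) (SIGMA s:S. {1..nat (s i)}) (SIGMA t:S. A i t)"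
      proof (rule bij_betw_byWitness[where f' = "\<lambda>(t, j). (t(i := t i + int j), j)"])
        show "\<forall>a\<in>(SIGMA s:S. {1..nat (s i)}). (\<lambda>(t, j). (t(i := t i + int j), j)) ((\<lambda>(s, j). (s(i := s i - int j), j)) a) = a"
          by (auto simp: fun_eq_iff)
        show "\<forall>a\<in>(SIGMA t:S. A i t). (\<lambda>(s, j). (s(i := s i - int j), j)) ((\<lambda>(t, j). (t(i := t i + int j), j)) a) = a"
          by (auto simp: fun_eq_iff)
        show "(\<lambda>(s, j). (s(i := s i - int j), j)) ` (SIGMA s:S. {1..nat (s i)}) \<subseteq> (SIGMA t:S. A i t)"
        proof (rule image_subsetI)
          fix x assume "x \<in> (SIGMA s:S. {1..nat (s i)})"
          then obtain s j where x: "x = (s, j)" and s: "s \<in> S" and j: "j \<in> {1..nat (s i)}" by blast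
          have so: "s \<in> orth d" using S s by auto
          have t: "s(i := s i - int j) \<in> orth d" using so j i unfolding orth_def by auto
          have "s(i := s i - int j) \<in> S"
            by (rule downclosed[OF S up s t]) (use j in auto)
          moreover have "(s(i := s i - int j))(i := (s(i := s i - int j)) i + int j) = s" by auto
          ultimately show "(\<lambda>(s, j). (s(i := s i - int j), j)) x \<in> (SIGMA t:S. A i t)"
            using j s x unfolding A_def by auto
        qed
        show "(\<lambda>(t, j). (t(i := t i + int j), j)) ` (SIGMA t:S. A i t) \<subseteq> (SIGMA s:S. {1..nat (s i)})"
        proof (rule image_subsetI)
          fix x assume "x \<in> (SIGMA t:S. A i t)"
          then obtain t j where x: "x = (t, j)" and t: "t \<in> S" and j: "j \<in> A i t" by blast
          have "t \<in> orth d" using S t by auto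
          hence "t i \<ge> 0" using i unfolding orth_def by auto
          thus "(\<lambda>(t, j). (t(i := t i + int j), j)) x \<in> (SIGMA s:S. {1..nat (s i)})"
            using j x unfolding A_def by auto
        qed
      qed
    qed
    also have "\<dots> = (\<Sum>t\<in>S. card (A i t))" using fin finA by (simp add: card_SigmaI)
    finally show ?thesis .
  qed
  have countr: "(\<Sum>s\<in>S. real_of_int (s i)) = (\<Sum>t\<in>S. real (card (A i t)))" if i: "i < d" for i
  proof -
    have "(\<Sum>s\<in>S. real_of_int (s i)) = (\<Sum>s\<in>S. real (nat (s i)))"
    proof (rule sum.cong)
      fix s assume "s \<in> S"
      hence "s i \<ge> 0" using S i unfolding orth_def by auto
      thus "real_of_int (s i) = real (nat (s i))" by simp
    qed simp
    also have "\<dots> = real (\<Sum>s\<in>S. nat (s i))" by simp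
    also have "\<dots> = real (\<Sum>t\<in>S. card (A i t))" using count[OF i] by simp
    finally show ?thesis by simp
  qed
  have "(\<Sum>s\<in>S. proj d y s) = (\<Sum>i<d. y i * (\<Sum>s\<in>S. real_of_int (s i)))"
    unfolding proj_def by (simp add: sum.swap[of _ S] sum_distrib_left mult.commute)
  also have "\<dots> = (\<Sum>i<d. y i * (\<Sum>t\<in>S. real (card (A i t))))"
    using countr by simp
  also have "\<dots> = (\<Sum>t\<in>S. \<Sum>i<d. y i * real (card (A i t)))"
    by (simp add: sum.swap[of _ S] sum_distrib_left)
  also have "\<dots> \<le> (\<Sum>t\<in>S. \<Sum>i<d. (C - proj d y t))"
    by (intro sum_mono) (use cardA in auto)
  also have "\<dots> = real d * (\<Sum>t\<in>S. (C - proj d y t))"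
    by (simp add: sum_distrib_left)
  finally have key: "(\<Sum>s\<in>S. proj d y s) \<le> real d * (\<Sum>t\<in>S. (C - proj d y t))" .
  have "(\<Sum>t\<in>S. (C - proj d y t)) = C * real (card S) - (\<Sum>s\<in>S. proj d y s)"
    by (simp add: sum_subtractf mult.commute)
  thus ?thesis using key by (simp add: algebra_simps)
qed

end
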